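(* Let $X$ be a compact metric space and $f\colon X\to X$ continuous with $h_{\mathrm{top}}(f)<\infty$. Given $\eta,\phi\in C(X)$ and $Z\subset X$, suppose there exist $\alpha,\beta\in\mathbb{R}$ such that $$\alpha\le\liminf_{n\to\infty}\frac1nS_n\phi(x)\le\limsup_{n\to\infty}\frac1nS_n\phi(x)\le\beta$$ for every $x\in Z$. Then $P_Z(\eta)+\alpha t\le P_Z(\eta+t\phi)\le P_Z(\eta)+\beta t$ for all $t>0$.
   Context: $S_n\phi=\sum_{k=0}^{n-1}\phi\circ f^k$; $B(x,n,\delta)=\{y\mid d(f^kx,f^ky)<\delta,\ 0\le k\le n\}$. Pressure on a set $Z\subset X$: let $\mathcal{P}(Z,N,\delta)$ be the collection of countable sets $\{(x_i,n_i)\}\subset Z\times\{N,N+1,\dots\}$ with $Z\subset\bigcup_iB(x_i,n_i,\delta)$; $m_P(Z,s,\phi,\delta)=\lim_{N\to\infty}\inf_{\mathcal{P}(Z,N,\delta)}\sum_i\exp(-n_is+S_{n_i}\phi(x_i))$; $P_Z(\phi,\delta)=\inf\{s\mid m_P(Z,s,\phi,\delta)=0\}$; $P_Z(\phi)=\lim_{\delta\to0}P_Z(\phi,\delta)$; $P_\emptyset=-\infty$. *)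

theory Defs
  imports "HOL-Analysis.Analysis" "HOL-Library.Extended_Real" "HOL-Library.Extended_Nonnegative_Real"
begin

definition birkhoff_sum :: "('a \<Rightarrow> 'a) \<Rightarrow> ('a \<Rightarrow> real) \<Rightarrow> nat \<Rightarrow> 'a \<Rightarrow> real" where
  "birkhoff_sum f \<phi> n x = (\<Sum>k<n. \<phi> ((f ^^ k) x))"

definition bowen_ball :: "('a::metric_space \<Rightarrow> 'a) \<Rightarrow> 'a \<Rightarrow> nat \<Rightarrow> real \<Rightarrow> 'a set" where
  "bowen_ball f x n \<delta> = {y. \<forall>k\<le>n. dist ((f ^^ k) x) ((f ^^ k) y) < \<delta>}"

definition separated :: "('a::metric_space \<Rightarrow> 'a) \<Rightarrow> nat \<Rightarrow> real \<Rightarrow> 'a set \<Rightarrow> bool" where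
  "separated f n \<delta> E \<longleftrightarrow>
     (\<forall>x\<in>E. \<forall>y\<in>E. x \<noteq> y \<longrightarrow> (\<exists>k<n. dist ((f ^^ k) x) ((f ^^ k) y) > \<delta>))"

definition max_sep :: "('a::metric_space \<Rightarrow> 'a) \<Rightarrow> nat \<Rightarrow> real \<Rightarrow> nat" where
  "max_sep f n \<delta> = Sup {card E | E. finite E \<and> separated f n \<delta> E}"

definition htop :: "('a::metric_space \<Rightarrow> 'a) \<Rightarrow> ereal" where
  "htop f = Lim (at_right 0)
     (\<lambda>\<delta>. limsup (\<lambda>n. ereal (ln (real (max_sep f n \<delta>)) / real n)))"

definition covers :: "('a::metric_space \<Rightarrow> 'a) \<Rightarrow> 'a set \<Rightarrow> nat \<Rightarrow> real \<Rightarrow> ('a \<times> nat) set set" where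
  "covers f Z N \<delta> = {C. countable C \<and> C \<subseteq> Z \<times> {N..} \<and>
                        Z \<subseteq> (\<Union>(x,n)\<in>C. bowen_ball f x n \<delta>)}"

definition mP :: "('a::metric_space \<Rightarrow> 'a) \<Rightarrow> 'a set \<Rightarrow> real \<Rightarrow> ('a \<Rightarrow> real) \<Rightarrow> real \<Rightarrow> ennreal" where
  "mP f Z s \<phi> \<delta> = Lim sequentially (\<lambda>N.
      INF C\<in>covers f Z N \<delta>.
        (\<Sum>\<^sub>\<infinity> (x,n)\<in>C. ennreal (exp (- real n * s + birkhoff_sum f \<phi> n x))))"

text \<open>P_Z(phi,delta) = inf{s | m_P(Z,s,phi,delta) = 0}; with Inf {} = +infinity, and
  P_{empty} = -infinity comes out automatically (every s qualifies).\<close>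
definition pressure_delta :: "('a::metric_space \<Rightarrow> 'a) \<Rightarrow> 'a set \<Rightarrow> ('a \<Rightarrow> real) \<Rightarrow> real \<Rightarrow> ereal" where
  "pressure_delta f Z \<phi> \<delta> = Inf (ereal ` {s. mP f Z s \<phi> \<delta> = 0})"

definition pressure :: "('a::metric_space \<Rightarrow> 'a) \<Rightarrow> 'a set \<Rightarrow> ('a \<Rightarrow> real) \<Rightarrow> ereal" where
  "pressure f Z \<phi> = Lim (at_right 0) (\<lambda>\<delta>. pressure_delta f Z \<phi> \<delta>)"

end

theory Submission
  imports Defs
begin

definition wt :: "('a \<Rightarrow> 'a) \<Rightarrow> ('a \<Rightarrow> real) \<Rightarrow> real \<Rightarrow> 'a \<times> nat \<Rightarrow> ennreal" where
  "wt f \<psi> s = (\<lambda>(x,n). ennreal (exp (- real n * s + birkhoff_sum f \<psi> n x)))"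

definition Icov :: "('a::metric_space \<Rightarrow> 'a) \<Rightarrow> 'a set \<Rightarrow> nat \<Rightarrow> real \<Rightarrow> real \<Rightarrow> ('a \<Rightarrow> real) \<Rightarrow> ennreal" where
  "Icov f Z N \<delta> s \<psi> = (INF C\<in>covers f Z N \<delta>. infsum (wt f \<psi> s) C)"

lemma summ_enn[simp]: "(g :: _ \<Rightarrow> ennreal) summable_on A"
  by (rule nonneg_summable_on_complete) simp

lemma covers_mono_N: "N \<le> N' \<Longrightarrow> covers f Z N' \<delta> \<subseteq> covers f Z N \<delta>"
  by (auto simp: covers_def)

lemma bowen_ball_mono: "\<delta> \<le> \<delta>' \<Longrightarrow> bowen_ball f x n \<delta> \<subseteq> bowen_ball f x n \<delta>'"
  by (force simp: bowen_ball_def)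

lemma covers_mono_delta: "\<delta> \<le> \<delta>' \<Longrightarrow> covers f Z N \<delta> \<subseteq> covers f Z N \<delta>'"
  unfolding covers_def using bowen_ball_mono by fastforce

lemma Icov_mono_N: "N \<le> N' \<Longrightarrow> Icov f Z N \<delta> s \<psi> \<le> Icov f Z N' \<delta> s \<psi>"
  unfolding Icov_def by (rule INF_superset_mono[OF covers_mono_N]) auto

lemma Icov_mono_delta: "\<delta> \<le> \<delta>' \<Longrightarrow> Icov f Z N \<delta>' s \<psi> \<le> Icov f Z N \<delta> s \<psi>"
  unfolding Icov_def by (rule INF_superset_mono[OF covers_mono_delta]) auto

lemma mP_SUP: "mP f Z s \<psi> \<delta> = (SUP N. Icov f Z N \<delta> s \<psi>)"
proof -
  have "incseq (\<lambda>N. Icov f Z N \<delta> s \<psi>)" by (rule monoI) (rule Icov_mono_N)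
  then have "(\<lambda>N. Icov f Z N \<delta> s \<psi>) \<longlonglongrightarrow> (SUP N. Icov f Z N \<delta> s \<psi>)" by (rule LIMSEQ_SUP)
  then show ?thesis unfolding mP_def
    by (intro tendsto_Lim) (simp_all add: Icov_def wt_def)
qed

lemma mP_zero_iff: "mP f Z s \<psi> \<delta> = 0 \<longleftrightarrow> (\<forall>N. Icov f Z N \<delta> s \<psi> = 0)"
  unfolding mP_SUP by (simp add: bot_ennreal[symmetric])

lemma wt_mono_s: "s \<le> s' \<Longrightarrow> wt f \<psi> s' p \<le> wt f \<psi> s p"
  by (cases p) (auto simp: wt_def intro!: ennreal_leI mult_left_mono)

lemma Icov_mono_s: "s \<le> s' \<Longrightarrow> Icov f Z N \<delta> s' \<psi> \<le> Icov f Z N \<delta> s \<psi>"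
  unfolding Icov_def by (intro INF_mono' infsum_mono) (auto intro: wt_mono_s)

lemma mP_zero_mono_s: "mP f Z s \<psi> \<delta> = 0 \<Longrightarrow> s \<le> s' \<Longrightarrow> mP f Z s' \<psi> \<delta> = 0"
  unfolding mP_zero_iff using Icov_mono_s by (metis le_zero_eq)

lemma pd_antimono:
  assumes d: "\<delta> \<le> \<delta>'" shows "pressure_delta f Z \<psi> \<delta>' \<le> pressure_delta f Z \<psi> \<delta>"
proof -
  have "mP f Z s \<psi> \<delta>' = 0" if "mP f Z s \<psi> \<delta> = 0" for s
    using that Icov_mono_delta[OF d, of f Z] unfolding mP_zero_iff by (metis le_zero_eq)
  then show ?thesis unfolding pressure_delta_def
    by (intro Inf_superset_mono image_mono) auto
qed

lemma pd_le: "mP f Z s \<psi> \<delta> = 0 \<Longrightarrow> pressure_delta f Z \<psi> \<delta> \<le> ereal s"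
  unfolding pressure_delta_def by (rule Inf_lower) auto

lemma pd_less: "pressure_delta f Z \<psi> \<delta> < ereal s \<Longrightarrow> mP f Z s \<psi> \<delta> = 0"
  unfolding pressure_delta_def
  by (auto simp: Inf_less_iff intro: mP_zero_mono_s)

lemma tendsto_antimono_at_right:
  fixes g :: "real \<Rightarrow> ereal"
  assumes "\<And>a b. 0 < a \<Longrightarrow> a \<le> b \<Longrightarrow> g b \<le> g a"
  shows "(g \<longlongrightarrow> (SUP \<delta>\<in>{0<..}. g \<delta>)) (at_right 0)"
proof (rule order_tendstoI)
  fix a assume "a < (SUP \<delta>\<in>{0<..}. g \<delta>)"
  then obtain d where d: "0 < d" "a < g d" by (auto simp: less_SUP_iff)
  show "\<forall>\<^sub>F x in at_right 0. a < g x"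
    unfolding eventually_at_right_field
  proof (intro exI[of _ d] conjI allI impI)
    fix y :: real assume "0 < y" "y < d"
    then show "a < g y" using d(2) assms[of y d] by (simp add: less_le_trans)
  qed (use d in auto)
next
  fix a assume a: "(SUP \<delta>\<in>{0<..}. g \<delta>) < a"
  show "\<forall>\<^sub>F x in at_right 0. g x < a"
    using eventually_at_right_less[of "0::real"]
  proof eventually_elim
    case (elim x)
    then have "g x \<le> (SUP \<delta>\<in>{0<..}. g \<delta>)" by (intro SUP_upper) auto
    then show ?case using a by (rule le_less_trans)
  qed
qed

lemma pressure_SUP: "pressure f Z \<psi> = (SUP \<delta>\<in>{0<..}. pressure_delta f Z \<psi> \<delta>)"
  unfolding pressure_def
  by (intro tendsto_Lim tendsto_antimono_at_right pd_antimono) auto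


lemma infsum_image_le_enn:
  fixes g :: "'b \<Rightarrow> ennreal"
  shows "infsum g (h ` A) \<le> infsum (g \<circ> h) A"
proof -
  have eq1: "infsum g (h ` A) = (SUP F\<in>{F. finite F \<and> F \<subseteq> h ` A}. sum g F)"
    by (rule nonneg_infsum_complete) simp
  have eq2: "infsum (g \<circ> h) A = (SUP F\<in>{F. finite F \<and> F \<subseteq> A}. sum (g \<circ> h) F)"
    by (rule nonneg_infsum_complete) simp
  show ?thesis unfolding eq1
  proof (rule SUP_least)
    fix F assume F: "F \<in> {F. finite F \<and> F \<subseteq> h ` A}"
    then have "finite F" "F \<subseteq> h ` A" by blast+
    then obtain F' where F': "F' \<subseteq> A" "finite F'" "F = h ` F'"
      using finite_subset_image[of F h A] by blast
    have "sum g F \<le> sum (g \<circ> h) F'" unfolding F'(3) using F'(2) by (rule sum_image_le) simp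
    also have "\<dots> \<le> infsum (g \<circ> h) A"
      unfolding eq2 using F' by (intro SUP_upper) blast
    finally show "sum g F \<le> infsum (g \<circ> h) A" .
  qed
qed

lemma birkhoff_add: "birkhoff_sum f (\<lambda>x. \<eta> x + t * \<phi> x) n x = birkhoff_sum f \<eta> n x + t * birkhoff_sum f \<phi> n x"
  by (simp add: birkhoff_sum_def sum.distrib sum_distrib_left)

lemma birkhoff_neg: "birkhoff_sum f (\<lambda>x. - \<phi> x) n x = - birkhoff_sum f \<phi> n x"
  by (simp add: birkhoff_sum_def sum_negf)

lemma birkhoff_diff_le:
  assumes unif: "\<And>x y. dist x y < \<delta> \<Longrightarrow> \<eta> y - \<eta> x \<le> c"
    and y: "y \<in> bowen_ball f x n \<delta>"
  shows "birkhoff_sum f \<eta> n y \<le> birkhoff_sum f \<eta> n x + real n * c"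
proof -
  have "birkhoff_sum f \<eta> n y - birkhoff_sum f \<eta> n x = (\<Sum>k<n. \<eta> ((f^^k) y) - \<eta> ((f^^k) x))"
    by (simp add: birkhoff_sum_def sum_subtractf)
  also have "\<dots> \<le> (\<Sum>k<n. c)"
    using y by (intro sum_mono unif) (auto simp: bowen_ball_def)
  finally show ?thesis by simp
qed

lemma key:
  assumes unif: "\<And>x y. dist x y < \<delta> \<Longrightarrow> \<eta> y - \<eta> x \<le> c"
    and ZM: "ZM \<subseteq> Z"
    and bnd: "\<And>x n. x \<in> ZM \<Longrightarrow> M \<le> n \<Longrightarrow> birkhoff_sum f \<phi> n x \<le> real n * b"
    and t: "0 \<le> t"
    and zero: "mP f Z (s - t*b - c) \<eta> \<delta> = 0"
    and NM: "M \<le> N"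
  shows "Icov f ZM N (2*\<delta>) s (\<lambda>x. \<eta> x + t*\<phi> x) = 0"
proof -
  define s' where "s' = s - t*b - c"
  have I0: "Icov f Z N \<delta> s' \<eta> = 0" using zero unfolding s'_def mP_zero_iff by blast
  have "Icov f ZM N (2*\<delta>) s (\<lambda>x. \<eta> x + t*\<phi> x) \<le> 0"
  proof (rule ennreal_le_epsilon)
    fix e :: real assume e: "0 < e"
    then have "Icov f Z N \<delta> s' \<eta> < ennreal e" using I0 by simp
    then obtain C where C: "C \<in> covers f Z N \<delta>" and Ce: "infsum (wt f \<eta> s') C < ennreal e"
      unfolding Icov_def by (auto simp: INF_less_iff)
    define good where "good p \<longleftrightarrow> bowen_ball f (fst p) (snd p) \<delta> \<inter> ZM \<noteq> {}" for p
    define g where "g p = (SOME y. y \<in> bowen_ball f (fst p) (snd p) \<delta> \<inter> ZM)" for p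
    define h where "h p = (g p, snd p)" for p
    define C0 where "C0 = {p\<in>C. good p}"
    have g: "g p \<in> bowen_ball f (fst p) (snd p) \<delta> \<inter> ZM" if "good p" for p
      using that unfolding good_def g_def by (metis (no_types, lifting) equals0I someI_ex)
    have Ccount: "countable C" and Csub: "C \<subseteq> Z \<times> {N..}"
      and Ccov: "Z \<subseteq> (\<Union>(x,n)\<in>C. bowen_ball f x n \<delta>)"
      using C by (auto simp: covers_def)
    have C'cov: "h ` C0 \<in> covers f ZM N (2*\<delta>)"
      unfolding covers_def
    proof (intro CollectI conjI)
      show "countable (h ` C0)" using Ccount unfolding C0_def by (intro countable_image) auto
      show "h ` C0 \<subseteq> ZM \<times> {N..}"
        using g Csub unfolding C0_def h_def by force
      show "ZM \<subseteq> (\<Union>(x,n)\<in>h ` C0. bowen_ball f x n (2*\<delta>))"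
      proof
        fix z assume z: "z \<in> ZM"
        then obtain x n where xn: "(x,n) \<in> C" "z \<in> bowen_ball f x n \<delta>" using Ccov ZM by blast
        then have gd: "good (x,n)" using z unfolding good_def by auto
        then have gy: "g (x,n) \<in> bowen_ball f x n \<delta>" using g by fastforce
        have "z \<in> bowen_ball f (g (x,n)) n (2*\<delta>)"
          unfolding bowen_ball_def
        proof (intro CollectI allI impI)
          fix k assume "k \<le> n"
          then have "dist ((f^^k) x) ((f^^k) (g (x,n))) < \<delta>" "dist ((f^^k) x) ((f^^k) z) < \<delta>"
            using gy xn(2) by (auto simp: bowen_ball_def)
          then show "dist ((f^^k) (g (x,n))) ((f^^k) z) < 2*\<delta>"
            using dist_triangle3[of "(f^^k) (g (x,n))" "(f^^k) z" "(f^^k) x"] by linarith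
        qed
        moreover have "(g (x,n), n) \<in> h ` C0" using xn gd unfolding C0_def h_def by force
        ultimately show "z \<in> (\<Union>(x,n)\<in>h ` C0. bowen_ball f x n (2*\<delta>))" by blast
      qed
    qed
    have wle: "wt f (\<lambda>x. \<eta> x + t*\<phi> x) s (h p) \<le> wt f \<eta> s' p" if p: "p \<in> C0" for p
    proof -
      obtain x n where pxn: "p = (x,n)" by (cases p)
      have gd: "good p" and pC: "p \<in> C" using p unfolding C0_def by auto
      have nN: "N \<le> n" using Csub pC pxn by auto
      let ?y = "g (x,n)"
      have yb: "?y \<in> bowen_ball f x n \<delta>" and yZ: "?y \<in> ZM" using g[OF gd] pxn by auto
      have e1: "birkhoff_sum f \<eta> n ?y \<le> birkhoff_sum f \<eta> n x + real n * c"
        by (rule birkhoff_diff_le[OF unif yb])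
      have e2: "t * birkhoff_sum f \<phi> n ?y \<le> t * (real n * b)"
        using bnd[OF yZ] NM nN t by (intro mult_left_mono) auto
      have "- real n * s + birkhoff_sum f (\<lambda>x. \<eta> x + t*\<phi> x) n ?y \<le> - real n * s' + birkhoff_sum f \<eta> n x"
        using e1 e2 unfolding birkhoff_add s'_def by (simp add: algebra_simps)
      then show ?thesis unfolding pxn h_def wt_def by (auto intro!: ennreal_leI)
    qed
    have "Icov f ZM N (2*\<delta>) s (\<lambda>x. \<eta> x + t*\<phi> x) \<le> infsum (wt f (\<lambda>x. \<eta> x + t*\<phi> x) s) (h ` C0)"
      unfolding Icov_def using C'cov by (rule INF_lower)
    also have "\<dots> \<le> infsum (wt f (\<lambda>x. \<eta> x + t*\<phi> x) s \<circ> h) C0"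
      by (rule infsum_image_le_enn)
    also have "\<dots> \<le> infsum (wt f \<eta> s') C0"
      using wle by (intro infsum_mono) auto
    also have "\<dots> \<le> infsum (wt f \<eta> s') C"
      unfolding C0_def by (intro infsum_mono_neutral) auto
    also have "\<dots> \<le> ennreal e" using Ce by simp
    finally show "Icov f ZM N (2*\<delta>) s (\<lambda>x. \<eta> x + t*\<phi> x) \<le> 0 + ennreal e" by simp
  qed
  then show ?thesis by simp
qed


lemma sum_le_cover:
  fixes g :: "'b \<Rightarrow> ennreal" and K :: nat
  shows "finite F \<Longrightarrow> F \<subseteq> (\<Union>M<K. C M) \<Longrightarrow> sum g F \<le> (\<Sum>M<K. sum g (F \<inter> C M))"
proof (induction K arbitrary: F)
  case 0 then show ?case by simp
next
  case (Suc K)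
  have fin: "finite F" by fact
  have "F = (F - C K) \<union> (F \<inter> C K)" by blast
  then have "sum g F = sum g ((F - C K) \<union> (F \<inter> C K))" by simp
  also have "\<dots> = sum g (F - C K) + sum g (F \<inter> C K)"
    by (rule sum.union_disjoint) (use fin in auto)
  finally have split: "sum g F = sum g (F - C K) + sum g (F \<inter> C K)" .
  have sub: "F - C K \<subseteq> (\<Union>M<K. C M)"
  proof
    fix p assume p: "p \<in> F - C K"
    then obtain M where "M < Suc K" "p \<in> C M" using Suc.prems(2) by blast
    moreover have "M \<noteq> K" using p \<open>p \<in> C M\<close> by blast
    ultimately show "p \<in> (\<Union>M<K. C M)" by (auto simp: less_Suc_eq)
  qed
  have "sum g (F - C K) \<le> (\<Sum>M<K. sum g ((F - C K) \<inter> C M))"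
    by (rule Suc.IH) (use fin sub in auto)
  also have "\<dots> \<le> (\<Sum>M<K. sum g (F \<inter> C M))"
  proof (rule sum_mono)
    fix M show "sum g ((F - C K) \<inter> C M) \<le> sum g (F \<inter> C M)"
      by (rule sum_mono2) (use fin in auto)
  qed
  finally have "sum g F \<le> (\<Sum>M<K. sum g (F \<inter> C M)) + sum g (F \<inter> C K)"
    unfolding split by (rule add_right_mono)
  then show ?case by simp
qed

lemma geo_le: "(\<Sum>M<K. e / 2 ^ Suc M) \<le> (e::real)" if "0 \<le> e"
proof -
  have "(\<Sum>M<K. e / 2 ^ Suc M) = e - e / 2 ^ K"
    by (induction K) (auto simp: field_simps)
  then show ?thesis using that by simp
qed

lemma union_zero:
  fixes ZM :: "nat \<Rightarrow> 'a::metric_space set"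
  assumes sub: "\<And>M. ZM M \<subseteq> Z" and cov: "Z \<subseteq> (\<Union>M. ZM M)"
    and z: "\<And>M. Icov f (ZM M) N \<delta> s \<psi> = 0"
  shows "Icov f Z N \<delta> s \<psi> = 0"
proof -
  have "Icov f Z N \<delta> s \<psi> \<le> 0"
  proof (rule ennreal_le_epsilon)
    fix e :: real assume e: "0 < e"
    have "\<exists>C. C \<in> covers f (ZM M) N \<delta> \<and> infsum (wt f \<psi> s) C < ennreal (e / 2 ^ Suc M)" for M
    proof -
      have "Icov f (ZM M) N \<delta> s \<psi> < ennreal (e / 2 ^ Suc M)" using z e by simp
      then show ?thesis unfolding Icov_def by (auto simp: INF_less_iff)
    qed
    then obtain C where C: "\<And>M. C M \<in> covers f (ZM M) N \<delta>"
      and Ce: "\<And>M. infsum (wt f \<psi> s) (C M) < ennreal (e / 2 ^ Suc M)"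
      by metis
    have Ucov: "(\<Union>M. C M) \<in> covers f Z N \<delta>"
      unfolding covers_def
    proof (intro CollectI conjI)
      show "countable (\<Union>M. C M)" using C by (auto simp: covers_def)
      show "(\<Union>M. C M) \<subseteq> Z \<times> {N..}" using C sub by (fastforce simp: covers_def)
      show "Z \<subseteq> (\<Union>(x,n)\<in>(\<Union>M. C M). bowen_ball f x n \<delta>)"
      proof
        fix z assume "z \<in> Z"
        then obtain M where "z \<in> ZM M" using cov by blast
        then obtain p where "p \<in> C M" "z \<in> (case p of (x,n) \<Rightarrow> bowen_ball f x n \<delta>)"
          using C[of M] by (auto simp: covers_def)
        then show "z \<in> (\<Union>(x,n)\<in>(\<Union>M. C M). bowen_ball f x n \<delta>)" by blast
      qed
    qed
    have "infsum (wt f \<psi> s) (\<Union>M. C M) \<le> ennreal e"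
    proof -
      have "infsum (wt f \<psi> s) (\<Union>M. C M) = (SUP F\<in>{F. finite F \<and> F \<subseteq> (\<Union>M. C M)}. sum (wt f \<psi> s) F)"
        by (rule nonneg_infsum_complete) simp
      also have "\<dots> \<le> ennreal e"
      proof (rule SUP_least)
        fix F assume "F \<in> {F. finite F \<and> F \<subseteq> (\<Union>M. C M)}"
        then have F: "finite F" "F \<subseteq> (\<Union>M. C M)" by auto
        have "\<forall>p\<in>F. \<exists>M. p \<in> C M" using F by blast
        then obtain idx where idx: "\<And>p. p \<in> F \<Longrightarrow> p \<in> C (idx p)" by metis
        define K where "K = Suc (Max (idx ` F \<union> {0}))"
        have "idx p < K" if "p \<in> F" for p
          using F(1) that unfolding K_def by (simp add: le_imp_less_Suc)
        then have FK: "F \<subseteq> (\<Union>M<K. C M)" using idx by blast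
        have "sum (wt f \<psi> s) F \<le> (\<Sum>M<K. sum (wt f \<psi> s) (F \<inter> C M))"
          by (rule sum_le_cover[OF F(1) FK])
        also have "\<dots> \<le> (\<Sum>M<K. ennreal (e / 2 ^ Suc M))"
        proof (rule sum_mono)
          fix M
          have "sum (wt f \<psi> s) (F \<inter> C M) \<le> infsum (wt f \<psi> s) (C M)"
            unfolding nonneg_infsum_complete[of "C M" "wt f \<psi> s", simplified]
            using F by (intro SUP_upper) auto
          then show "sum (wt f \<psi> s) (F \<inter> C M) \<le> ennreal (e / 2 ^ Suc M)"
            using Ce[of M] by simp
        qed
        also have "\<dots> = ennreal (\<Sum>M<K. e / 2 ^ Suc M)"
          using e by (simp add: sum_ennreal)
        also have "\<dots> \<le> ennreal e" using geo_le[of e K] e by (intro ennreal_leI) auto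
        finally show "sum (wt f \<psi> s) F \<le> ennreal e" .
      qed
      finally show ?thesis .
    qed
    moreover have "Icov f Z N \<delta> s \<psi> \<le> infsum (wt f \<psi> s) (\<Union>M. C M)"
      unfolding Icov_def using Ucov by (rule INF_lower)
    ultimately show "Icov f Z N \<delta> s \<psi> \<le> 0 + ennreal e" by simp
  qed
  then show ?thesis by simp
qed


lemma ereal_le_dense:
  fixes x y :: ereal
  assumes "\<And>z. x < ereal z \<Longrightarrow> y \<le> ereal z"
  shows "y \<le> x"
proof (rule ccontr)
  assume "\<not> y \<le> x"
  then have "x < y" by simp
  then obtain z where "x < ereal z" "ereal z < y" using ereal_dense2 by blast
  then show False using assms by (meson leD)
qed

lemma upper:
  fixes f :: "'a::metric_space \<Rightarrow> 'a" and \<eta> \<phi> :: "'a \<Rightarrow> real"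
  assumes cpt: "compact (UNIV::'a set)" and ce: "continuous_on UNIV \<eta>" and t: "0 < t"
    and hyp: "\<And>x \<epsilon>. x \<in> Z \<Longrightarrow> 0 < \<epsilon> \<Longrightarrow>
       eventually (\<lambda>n. birkhoff_sum f \<phi> n x \<le> real n * (\<beta> + \<epsilon>)) sequentially"
  shows "pressure f Z (\<lambda>x. \<eta> x + t*\<phi> x) \<le> pressure f Z \<eta> + ereal (\<beta>*t)"
proof (rule ereal_le_epsilon2)
  fix e :: real assume e: "0 < e"
  have uc: "uniformly_continuous_on UNIV \<eta>" using compact_uniformly_continuous[OF ce cpt] .
  obtain d0 where d0: "0 < d0" and d0u: "\<And>x y. dist x y < d0 \<Longrightarrow> \<eta> y - \<eta> x \<le> e/2"
  proof -
    have "e/2 > 0" using e by simp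
    then obtain d where "d>0" and d: "\<forall>x\<in>UNIV. \<forall>x'\<in>UNIV. dist x' x < d \<longrightarrow> dist (\<eta> x') (\<eta> x) < e/2"
      using uc unfolding uniformly_continuous_on_def by blast
    have "\<eta> y - \<eta> x \<le> e/2" if "dist x y < d" for x y
    proof -
      have "dist (\<eta> y) (\<eta> x) < e/2" using d that by (simp add: dist_commute)
      then have "\<bar>\<eta> y - \<eta> x\<bar> < e/2" by (simp add: dist_real_def)
      then show ?thesis by linarith
    qed
    then show ?thesis using that \<open>d>0\<close> by blast
  qed
  define b where "b = \<beta> + e/(2*t)"
  define ZM where "ZM M = {x\<in>Z. \<forall>n\<ge>M. birkhoff_sum f \<phi> n x \<le> real n * b}" for M :: nat
  have tb: "t*b + e/2 = \<beta>*t + e" unfolding b_def using t by (simp add: field_simps)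
  have cov: "Z \<subseteq> (\<Union>M. ZM M)"
  proof
    fix x assume x: "x \<in> Z"
    have "e/(2*t) > 0" using e t by simp
    from hyp[OF x this] obtain M where "\<forall>n\<ge>M. birkhoff_sum f \<phi> n x \<le> real n * b"
      unfolding eventually_sequentially b_def by blast
    then show "x \<in> (\<Union>M. ZM M)" using x unfolding ZM_def by blast
  qed
  have A: "pressure_delta f Z (\<lambda>x. \<eta> x + t*\<phi> x) (2*\<delta>) \<le> pressure_delta f Z \<eta> \<delta> + ereal (\<beta>*t + e)"
    if \<delta>: "0 < \<delta>" "\<delta> < d0" for \<delta>
  proof (rule ereal_le_dense)
    fix z assume z: "pressure_delta f Z \<eta> \<delta> + ereal (\<beta>*t + e) < ereal z"
    have "pressure_delta f Z \<eta> \<delta> < ereal (z - t*b - e/2)"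
      using z tb by (cases "pressure_delta f Z \<eta> \<delta>") auto
    then have m0: "mP f Z (z - t*b - e/2) \<eta> \<delta> = 0" by (rule pd_less)
    have kz: "Icov f (ZM M) N (2*\<delta>) z (\<lambda>x. \<eta> x + t*\<phi> x) = 0" if "M \<le> N" for M N
      by (rule key[OF _ _ _ _ m0 that]) (use d0u \<delta> t in \<open>auto simp: ZM_def\<close>)
    have "Icov f (ZM M) N (2*\<delta>) z (\<lambda>x. \<eta> x + t*\<phi> x) = 0" for M N
      using Icov_mono_N[of N "max N M" f "ZM M" "2*\<delta>" z "\<lambda>x. \<eta> x + t*\<phi> x"] kz[of M "max N M"]
      by simp
    then have "Icov f Z N (2*\<delta>) z (\<lambda>x. \<eta> x + t*\<phi> x) = 0" for N
      by (intro union_zero[OF _ cov]) (auto simp: ZM_def)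
    then have "mP f Z z (\<lambda>x. \<eta> x + t*\<phi> x) (2*\<delta>) = 0" unfolding mP_zero_iff by blast
    then show "pressure_delta f Z (\<lambda>x. \<eta> x + t*\<phi> x) (2*\<delta>) \<le> ereal z" by (rule pd_le)
  qed
  have "pressure f Z (\<lambda>x. \<eta> x + t*\<phi> x) \<le> pressure f Z \<eta> + ereal (\<beta>*t + e)"
    unfolding pressure_SUP[of f Z "\<lambda>x. \<eta> x + t*\<phi> x"]
  proof (rule SUP_least)
    fix \<delta> :: real assume "\<delta> \<in> {0<..}"
    then have \<delta>: "0 < \<delta>" by simp
    define d where "d = min (\<delta>/2) (d0/2)"
    have d: "0 < d" "d < d0" "2*d \<le> \<delta>" unfolding d_def using \<delta> d0 by auto
    have "pressure_delta f Z (\<lambda>x. \<eta> x + t*\<phi> x) \<delta> \<le> pressure_delta f Z (\<lambda>x. \<eta> x + t*\<phi> x) (2*d)"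
      using d by (intro pd_antimono) auto
    also have "\<dots> \<le> pressure_delta f Z \<eta> d + ereal (\<beta>*t + e)" using A d by blast
    also have "\<dots> \<le> pressure f Z \<eta> + ereal (\<beta>*t + e)"
      unfolding pressure_SUP[of f Z \<eta>] using d by (intro add_right_mono SUP_upper) auto
    finally show "pressure_delta f Z (\<lambda>x. \<eta> x + t*\<phi> x) \<delta> \<le> pressure f Z \<eta> + ereal (\<beta>*t + e)" .
  qed
  also have "\<dots> = pressure f Z \<eta> + ereal (\<beta>*t) + ereal e"
    by (simp add: add.assoc)
  finally show "pressure f Z (\<lambda>x. \<eta> x + t*\<phi> x) \<le> pressure f Z \<eta> + ereal (\<beta>*t) + ereal e" .
qed

theorem lemma4p8:
  fixes f :: "'a::metric_space \<Rightarrow> 'a" and \<eta> \<phi> :: "'a \<Rightarrow> real"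
    and Z :: "'a set" and \<alpha> \<beta> :: real
  assumes "compact (UNIV :: 'a set)"
    and "continuous_on UNIV f"
    and "htop f < \<infinity>"
    and "continuous_on UNIV \<eta>" and "continuous_on UNIV \<phi>"
    and "\<And>x. x \<in> Z \<Longrightarrow>
           ereal \<alpha> \<le> liminf (\<lambda>n. ereal (birkhoff_sum f \<phi> n x / real n))"
    and "\<And>x. x \<in> Z \<Longrightarrow>
           limsup (\<lambda>n. ereal (birkhoff_sum f \<phi> n x / real n)) \<le> ereal \<beta>"
  shows "\<forall>t>0.
           pressure f Z \<eta> + ereal (\<alpha> * t) \<le> pressure f Z (\<lambda>x. \<eta> x + t * \<phi> x) \<and>
           pressure f Z (\<lambda>x. \<eta> x + t * \<phi> x) \<le> pressure f Z \<eta> + ereal (\<beta> * t)"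
proof (intro allI impI conjI)
  fix t :: real assume t: "0 < t"
  have hyp1: "eventually (\<lambda>n. birkhoff_sum f \<phi> n x \<le> real n * (\<beta> + \<epsilon>)) sequentially"
    if x: "x \<in> Z" and \<epsilon>: "0 < \<epsilon>" for x \<epsilon>
  proof -
    have "limsup (\<lambda>n. ereal (birkhoff_sum f \<phi> n x / real n)) < ereal (\<beta> + \<epsilon>)"
      using assms(7)[OF x] \<epsilon> by (simp add: le_less_trans)
    then have "eventually (\<lambda>n. ereal (birkhoff_sum f \<phi> n x / real n) < ereal (\<beta> + \<epsilon>)) sequentially"
      by (rule Limsup_lessD)
    then show ?thesis
    proof (rule eventually_mono)
      fix n assume n: "ereal (birkhoff_sum f \<phi> n x / real n) < ereal (\<beta> + \<epsilon>)"
      show "birkhoff_sum f \<phi> n x \<le> real n * (\<beta> + \<epsilon>)"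
      proof (cases "n = 0")
        case True then show ?thesis by (simp add: birkhoff_sum_def)
      next
        case False
        then have "birkhoff_sum f \<phi> n x / real n < \<beta> + \<epsilon>" using n by simp
        then show ?thesis using False by (simp add: pos_divide_less_eq mult.commute)
      qed
    qed
  qed
  have hyp2: "eventually (\<lambda>n. birkhoff_sum f (\<lambda>x. - \<phi> x) n x \<le> real n * (- \<alpha> + \<epsilon>)) sequentially"
    if x: "x \<in> Z" and \<epsilon>: "0 < \<epsilon>" for x \<epsilon>
  proof -
    have "ereal (\<alpha> - \<epsilon>) < liminf (\<lambda>n. ereal (birkhoff_sum f \<phi> n x / real n))"
    proof -
      have "ereal (\<alpha> - \<epsilon>) < ereal \<alpha>" using \<epsilon> by simp
      then show ?thesis using assms(6)[OF x] by (rule less_le_trans)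
    qed
    then have "eventually (\<lambda>n. ereal (\<alpha> - \<epsilon>) < ereal (birkhoff_sum f \<phi> n x / real n)) sequentially"
      by (rule less_LiminfD)
    then show ?thesis
    proof (rule eventually_mono)
      fix n assume n: "ereal (\<alpha> - \<epsilon>) < ereal (birkhoff_sum f \<phi> n x / real n)"
      show "birkhoff_sum f (\<lambda>x. - \<phi> x) n x \<le> real n * (- \<alpha> + \<epsilon>)"
      proof (cases "n = 0")
        case True then show ?thesis by (simp add: birkhoff_sum_def)
      next
        case False
        then have "\<alpha> - \<epsilon> < birkhoff_sum f \<phi> n x / real n" using n by simp
        then have "(\<alpha> - \<epsilon>) * real n < birkhoff_sum f \<phi> n x" using False by (simp add: pos_less_divide_eq)
        then show ?thesis by (simp add: birkhoff_neg algebra_simps)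
      qed
    qed
  qed
  show "pressure f Z (\<lambda>x. \<eta> x + t * \<phi> x) \<le> pressure f Z \<eta> + ereal (\<beta> * t)"
    by (rule upper[OF assms(1) assms(4) t hyp1])
  have ce': "continuous_on UNIV (\<lambda>x. \<eta> x + t * \<phi> x)"
    using assms(4,5) by (intro continuous_intros)
  have "pressure f Z (\<lambda>x. (\<eta> x + t * \<phi> x) + t * (- \<phi> x)) \<le> pressure f Z (\<lambda>x. \<eta> x + t * \<phi> x) + ereal (- \<alpha> * t)"
    by (rule upper[OF assms(1) ce' t hyp2])
  moreover have "(\<lambda>x. (\<eta> x + t * \<phi> x) + t * (- \<phi> x)) = \<eta>" by (rule ext) simp
  ultimately have le: "pressure f Z \<eta> \<le> pressure f Z (\<lambda>x. \<eta> x + t * \<phi> x) + ereal (- \<alpha> * t)" by simp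
  show "pressure f Z \<eta> + ereal (\<alpha> * t) \<le> pressure f Z (\<lambda>x. \<eta> x + t * \<phi> x)"
    using le by (cases "pressure f Z \<eta>"; cases "pressure f Z (\<lambda>x. \<eta> x + t * \<phi> x)") auto
qed

end
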